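(* Let $0<s<r<1$ and let $P$ be a compact packing of the plane by discs of radii $1,r,s$. If some $s$-disc of $P$ has a corona whose coding $w$ is one of 1rss, 11rss, 1rrss, 1srss, then $P$ contains an $s$-disc whose corona coding is neither $w$ nor ssssss.
   Context: A packing is a set of discs in the plane with pairwise disjoint interiors; it is compact if its contact graph (centers as vertices, edges between tangent discs) is a triangulation of the plane. An $x$-disc is a disc of radius $x$. The corona of a disc $D$ is the set of discs tangent to $D$; its coding is the cyclic word over $\{1,r,s\}$ listing the radii of these discs in angular order around $D$ (consecutive letters correspond to tangent discs), considered up to rotation and reversal. *)

theory Defs
  imports "HOL-Analysis.Analysis"
begin

type_synonym disc = "complex \<times> real"

definition ctr :: "disc \<Rightarrow> complex" where "ctr D = fst D"
definition rad :: "disc \<Rightarrow> real" where "rad D = snd D"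

definition packing :: "disc set \<Rightarrow> bool" where
  "packing P \<longleftrightarrow> (\<forall>D\<in>P. rad D > 0) \<and>
     (\<forall>D\<in>P. \<forall>E\<in>P. D \<noteq> E \<longrightarrow> cmod (ctr D - ctr E) \<ge> rad D + rad E)"

definition tangent :: "disc \<Rightarrow> disc \<Rightarrow> bool" where
  "tangent D E \<longleftrightarrow> D \<noteq> E \<and> cmod (ctr D - ctr E) = rad D + rad E"

definition corona :: "disc set \<Rightarrow> disc \<Rightarrow> disc set" where
  "corona P D = {E \<in> P. tangent D E}"

definition corona_list :: "disc set \<Rightarrow> disc \<Rightarrow> disc list \<Rightarrow> bool" where
  "corona_list P D L \<longleftrightarrow> set L = corona P D \<and>
     sorted_wrt (\<lambda>E F. Arg (ctr E - ctr D) < Arg (ctr F - ctr D)) L"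

text \<open>Compact packing: the contact graph is a triangulation of the plane, i.e.
  around every disc D the tangent discs, in angular order, form a closed cycle of
  consecutively tangent discs surrounding D (each consecutive counterclockwise
  angular step lies strictly between 0 and pi).\<close>
definition compact_packing :: "disc set \<Rightarrow> bool" where
  "compact_packing P \<longleftrightarrow> packing P \<and>
     (\<forall>D\<in>P. \<exists>L. corona_list P D L \<and> L \<noteq> [] \<and>
        (\<forall>i<length L. tangent (L ! i) (L ! ((i + 1) mod length L)) \<and>
           Im (cnj (ctr (L ! i) - ctr D) * (ctr (L ! ((i + 1) mod length L)) - ctr D)) > 0))"

definition cyclic_equiv :: "'a list \<Rightarrow> 'a list \<Rightarrow> bool" where
  "cyclic_equiv u v \<longleftrightarrow> (\<exists>k. u = rotate k v \<or> u = rotate k (rev v))"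

definition has_coding :: "disc set \<Rightarrow> disc \<Rightarrow> real list \<Rightarrow> bool" where
  "has_coding P D w \<longleftrightarrow> (\<exists>L. corona_list P D L \<and> cyclic_equiv (map rad L) w)"

end

theory Submission
  imports Defs
begin


lemma Im_cnj_Arg: "Im (cnj x * y) = cmod x * cmod y * sin (Arg y - Arg x)"
proof -
  have "cnj x * y = rcis (cmod x) (- Arg x) * rcis (cmod y) (Arg y)"
    by (simp add: rcis_cnj rcis_cmod_Arg)
  also have "\<dots> = rcis (cmod x * cmod y) (Arg y - Arg x)" by (simp add: rcis_mult)
  finally show ?thesis by simp
qed

lemma sin_pos2: "-2*pi < x \<Longrightarrow> x < -pi \<Longrightarrow> sin x > 0"
proof -
  assume "-2*pi < x" "x < -pi"
  hence "sin (x + 2*pi) > 0" by (intro sin_gt_zero) auto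
  thus ?thesis by (simp add: sin_add)
qed

lemma sin_np1: "-pi \<le> x \<Longrightarrow> x \<le> 0 \<Longrightarrow> sin x \<le> 0"
  using sin_ge_zero[of "-x"] by simp

lemma sin_np2: "pi \<le> x \<Longrightarrow> x \<le> 2*pi \<Longrightarrow> sin x \<le> 0"
  using sin_ge_zero[of "x - pi"] by simp

lemma arg_cases:
  fixes a g y :: real
  assumes "-pi < a" "a \<le> pi" "-pi < g" "g \<le> pi" "-pi < y" "y \<le> pi"
    and "sin (y - a) > 0"
    and "(a < g \<and> g < y) \<or> (y < a \<and> a < g) \<or> (g < y \<and> y < a)"
  shows "sin (g - a) > 0 \<and> sin (y - g) > 0"
  using assms(8)
proof (elim disjE conjE)
  assume h: "a < g" "g < y"
  have "y - a < pi" proof (rule ccontr)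
    assume "\<not> y - a < pi" thus False using sin_np2[of "y-a"] assms h by auto qed
  thus ?thesis using h sin_gt_zero[of "g-a"] sin_gt_zero[of "y-g"] by auto
next
  assume h: "y < a" "a < g"
  have "y - a < -pi" proof (rule ccontr)
    assume "\<not> y - a < -pi" thus False using sin_np1[of "y-a"] assms h by auto qed
  thus ?thesis using h assms sin_gt_zero[of "g-a"] sin_pos2[of "y-g"] by auto
next
  assume h: "g < y" "y < a"
  have "y - a < -pi" proof (rule ccontr)
    assume "\<not> y - a < -pi" thus False using sin_np1[of "y-a"] assms h by auto qed
  thus ?thesis using h assms sin_pos2[of "g-a"] sin_gt_zero[of "y-g"] by auto
qed

lemma stewart:
  fixes x y c :: complex and t :: real
  shows "(cmod (of_real t * x + of_real (1-t) * y - c))^2 =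
     t * (cmod (x - c))^2 + (1-t) * (cmod (y - c))^2 - t*(1-t)*(cmod (x - y))^2"
  unfolding cmod_power2 by (simp add: algebra_simps power2_eq_square)

lemma det_id:
  fixes f d g :: complex
  shows "of_real (Im (cnj f * d)) * g = of_real (Im (cnj g * d)) * f + of_real (Im (cnj f * g)) * d"
  by (simp add: complex_eq_iff algebra_simps)

lemma orient_rot: "Im (cnj (b - a) * (c - a)) = Im (cnj (c - b) * (a - b))"
  by (simp add: algebra_simps)




lemma tri_lemma:
  fixes A B C p :: complex and a b c rA rB rC rG :: real
  assumes w: "a \<ge> 0" "b \<ge> 0" "c \<ge> 0" "a + b + c = 1"
    and p: "p = of_real a * A + of_real b * B + of_real c * C"
    and t: "cmod (A - B) = rA + rB" "cmod (A - C) = rA + rC" "cmod (B - C) = rB + rC"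
    and g: "cmod (p - A) \<ge> rA + rG" "cmod (p - B) \<ge> rB + rG" "cmod (p - C) \<ge> rC + rG"
    and r: "rA \<le> rG" "rB \<le> rG" "rA > 0" "rB > 0" "rC > 0" "rG > 0"
  shows False
proof -
  have cc: "c = 1 - a - b" using w(4) by linarith
  have pc: "p - C = of_real a * (A - C) + of_real b * (B - C)"
    by (simp add: p cc algebra_simps)
  have "cmod (p - C) \<le> cmod (of_real a * (A - C)) + cmod (of_real b * (B - C))"
    unfolding pc by (rule norm_triangle_ineq)
  also have "\<dots> = a * cmod (A - C) + b * cmod (B - C)" using w by (simp add: norm_mult)
  finally have "rC + rG \<le> a * (rA + rC) + b * (rB + rC)" using g t by simp
  moreover have "a * (rA + rC) + b * (rB + rC) \<le> (a + b) * (rG + rC)"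
    using w r add_mono[OF mult_left_mono[of rA rG a] mult_left_mono[of rB rG b]] by (simp add: algebra_simps)
  moreover have "(a + b) * (rG + rC) = (rG + rC) - c * (rG + rC)"
  proof -
    have "a + b = 1 - c" using w(4) by linarith
    thus ?thesis by (simp add: left_diff_distrib)
  qed
  ultimately have "c * (rG + rC) \<le> 0" by linarith
  hence c0: "c = 0" using w r by (smt (verit) mult_pos_pos)
  have aa: "a = 1 - b" using w c0 by linarith
  have pa: "p - A = of_real b * (B - A)" by (simp add: p c0 aa algebra_simps)
  have bb: "b = 1 - a" using w c0 by linarith
  have pb: "p - B = of_real a * (A - B)" by (simp add: p c0 bb algebra_simps)
  have "cmod (p - A) = b * (rA + rB)" unfolding pa using w t by (simp add: norm_mult norm_minus_commute)
  moreover have "cmod (p - B) = a * (rA + rB)" unfolding pb using w t by (simp add: norm_mult)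
  moreover have "b * (rA + rB) + a * (rA + rB) = rA + rB" by (simp add: aa algebra_simps)
  ultimately show False using g r by linarith
qed




lemma seg_lemma:
  fixes c x y g q :: complex and t \<sigma> rc rx ry rg :: real
  assumes tt: "0 \<le> t" "t \<le> 1" and ss: "0 \<le> \<sigma>" "\<sigma> \<le> 1"
    and q1: "q = of_real t * x + of_real (1-t) * y" and q2: "q = c + of_real \<sigma> * (g - c)"
    and d: "cmod (x - c) = rc + rx" "cmod (y - c) = rc + ry" "cmod (x - y) = rx + ry"
      "cmod (g - c) = rc + rg" "cmod (g - x) \<ge> rg + rx" "cmod (g - y) \<ge> rg + ry"
    and r: "rc > 0" "rx > 0" "ry > 0" "rg > 0"
  shows False
proof -
  have "q - x = of_real (1-t) * (y - x)" by (simp add: q1 algebra_simps)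
  hence dx: "cmod (q - x) = (1-t) * (rx + ry)" using tt d by (simp only: norm_mult norm_of_real) (simp add: norm_minus_commute)
  have "q - y = of_real t * (x - y)" by (simp add: q1 algebra_simps)
  hence dy: "cmod (q - y) = t * (rx + ry)" using tt d by (simp add: norm_mult)
  have "q - c = of_real \<sigma> * (g - c)" by (simp add: q2)
  hence dc: "cmod (q - c) = \<sigma> * (rc + rg)" using ss d by (simp add: norm_mult)
  have "g - q = of_real (1-\<sigma>) * (g - c)" by (simp add: q2 algebra_simps)
  hence dg: "cmod (g - q) = (1-\<sigma>) * (rc + rg)" using ss d by (simp only: norm_mult norm_of_real)
  have s1: "(1-t) * (rx + ry) + t * (rx + ry) = rx + ry" by (simp add: algebra_simps)
  have s2: "\<sigma> * (rc + rg) + (1-\<sigma>) * (rc + rg) = rc + rg" by (simp add: algebra_simps)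
  have i1: "cmod (x - c) \<le> cmod (q - x) + cmod (q - c)"
    using norm_triangle_ineq[of "x - q" "q - c"] by (simp add: norm_minus_commute)
  have i2: "cmod (y - c) \<le> cmod (q - y) + cmod (q - c)"
    using norm_triangle_ineq[of "y - q" "q - c"] by (simp add: norm_minus_commute)
  have i3: "cmod (g - x) \<le> cmod (g - q) + cmod (q - x)"
    using norm_triangle_ineq[of "g - q" "q - x"] by simp
  have i4: "cmod (g - y) \<le> cmod (g - q) + cmod (q - y)"
    using norm_triangle_ineq[of "g - q" "q - y"] by simp
  have e1: "cmod (q - c) = rc" and e2: "(1-t) * (rx + ry) = rx" and e3: "t * (rx + ry) = ry"
    using i1 i2 i3 i4 dx dy dc dg s1 s2 d by linarith+
  have st: "(cmod (q - c))^2 = t * (rc+rx)^2 + (1-t) * (rc+ry)^2 - t*(1-t)*(rx+ry)^2"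
    using stewart[of t x y c] d by (simp add: q1)
  have "(t*rx^2 + (1-t)*ry^2 - rx*ry) * (rx+ry) = 0"
  proof -
    have "(t*rx^2 + (1-t)*ry^2 - rx*ry) * (rx+ry) = (t*(rx+ry))*rx^2 + ((1-t)*(rx+ry))*ry^2 - rx*ry*(rx+ry)"
      by (simp add: algebra_simps)
    also have "\<dots> = 0" unfolding e2 e3 by (simp add: algebra_simps power2_eq_square)
    finally show ?thesis .
  qed
  hence z1: "t*rx^2 + (1-t)*ry^2 - rx*ry = 0" using r by simp
  have z2: "t*(1-t)*(rx+ry)^2 = rx*ry"
  proof -
    have "t*(1-t)*(rx+ry)^2 = (t*(rx+ry))*((1-t)*(rx+ry))" by (simp add: power2_eq_square algebra_simps)
    thus ?thesis by (simp add: e2 e3 mult.commute)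
  qed
  have ex: "t * (rc+rx)^2 + (1-t) * (rc+ry)^2 - t*(1-t)*(rx+ry)^2
     = rc^2 + 2*rc*(t*rx + (1-t)*ry) + (t*rx^2 + (1-t)*ry^2) - t*(1-t)*(rx+ry)^2"
    by (simp add: power2_eq_square algebra_simps)
  have pos: "t*rx + (1-t)*ry > 0"
  proof (cases "t = 0")
    case True thus ?thesis using r by simp
  next
    case False thus ?thesis using tt r
      by (smt (verit) mult_nonneg_nonneg mult_pos_pos)
  qed
  have "rc * (t*rx + (1-t)*ry) > 0" using r pos by simp
  thus False using st ex z1 z2 e1 by (simp add: power2_eq_square)
qed




lemma gc_lemma:
  fixes c x y g :: complex and rc rx ry rg :: real
  assumes d: "cmod (x - c) = rc + rx" "cmod (y - c) = rc + ry" "cmod (x - y) = rx + ry"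
      "cmod (g - c) = rc + rg" "cmod (g - x) \<ge> rg + rx" "cmod (g - y) \<ge> rg + ry"
    and r: "rc > 0" "rx > 0" "ry > 0" "rg > 0"
    and o: "Im (cnj (x - c) * (y - c)) > 0" "Im (cnj (x - c) * (g - c)) > 0" "Im (cnj (g - c) * (y - c)) > 0"
    and rr: "(rc \<le> rg \<and> rx \<le> rg) \<or> (rc \<le> rg \<and> ry \<le> rg) \<or> (rx \<le> rg \<and> ry \<le> rg)"
  shows False
proof -
  define k where "k = Im (cnj (x - c) * (y - c))"
  define \<alpha> where "\<alpha> = Im (cnj (g - c) * (y - c))"
  define \<beta> where "\<beta> = Im (cnj (x - c) * (g - c))"
  have kp: "k > 0" "\<alpha> > 0" "\<beta> > 0" using o by (auto simp: k_def \<alpha>_def \<beta>_def)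
  have id: "of_real k * (g - c) = of_real \<alpha> * (x - c) + of_real \<beta> * (y - c)"
    unfolding k_def \<alpha>_def \<beta>_def by (rule det_id)
  have gc: "g - c = of_real (\<alpha>/k) * (x - c) + of_real (\<beta>/k) * (y - c)"
  proof -
    have "g - c = (of_real k * (g - c)) / of_real k" using kp by simp
    also have "\<dots> = of_real (\<alpha>/k) * (x - c) + of_real (\<beta>/k) * (y - c)"
      unfolding id using kp by (simp add: field_simps)
    finally show ?thesis .
  qed
  show False
  proof (cases "\<alpha> + \<beta> \<le> k")
    case True
    define a where "a = \<alpha>/k"
    define b where "b = \<beta>/k"
    define e where "e = 1 - a - b"
    have "(\<alpha> + \<beta>)/k \<le> 1" using True kp by simp
    hence w: "a \<ge> 0" "b \<ge> 0" "e \<ge> 0" using kp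
      by (auto simp: a_def b_def e_def add_divide_distrib)
    have gg: "g = of_real e * c + of_real a * x + of_real b * y"
      using gc unfolding a_def[symmetric] b_def[symmetric] e_def
      by (simp add: algebra_simps)
    show False using rr
    proof (elim disjE conjE)
      assume h: "rc \<le> rg" "rx \<le> rg"
      show False
        apply (rule tri_lemma[of e a b g c x y rc rx ry rg])
        using w gg h r d by (auto simp: e_def norm_minus_commute algebra_simps)
    next
      assume h: "rc \<le> rg" "ry \<le> rg"
      show False
        apply (rule tri_lemma[of e b a g c y x rc ry rx rg])
        using w gg h r d by (auto simp: e_def norm_minus_commute algebra_simps)
    next
      assume h: "rx \<le> rg" "ry \<le> rg"
      show False
        apply (rule tri_lemma[of a b e g x y c rx ry rc rg])
        using w gg h r d by (auto simp: e_def norm_minus_commute algebra_simps)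
    qed
  next
    case False
    define \<sigma> where "\<sigma> = k / (\<alpha> + \<beta>)"
    define t where "t = \<alpha> / (\<alpha> + \<beta>)"
    define q where "q = of_real t * x + of_real (1-t) * y"
    have tt: "0 \<le> t" "t \<le> 1" "0 \<le> \<sigma>" "\<sigma> \<le> 1" using kp False
      by (auto simp: t_def \<sigma>_def field_simps)
    have q2: "q = c + of_real \<sigma> * (g - c)"
    proof -
      have "of_real \<sigma> * (g - c) = (of_real \<alpha> * (x - c) + of_real \<beta> * (y - c)) / of_real (\<alpha> + \<beta>)"
        unfolding \<sigma>_def id[symmetric] by (simp add: field_simps)
      moreover have "q = c + (of_real \<alpha> * (x - c) + of_real \<beta> * (y - c)) / of_real (\<alpha> + \<beta>)"
      proof -
        define S :: complex where "S = of_real (\<alpha> + \<beta>)"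
        have nz: "S \<noteq> 0" using kp unfolding S_def by (metis add_pos_pos of_real_eq_0_iff less_irrefl)
        have e1: "1 - \<alpha>/(\<alpha>+\<beta>) = \<beta>/(\<alpha>+\<beta>)" using kp by (simp add: field_simps)
        have "q = of_real \<alpha> / S * x + of_real \<beta> / S * y"
          unfolding q_def t_def e1 S_def by simp
        also have "\<dots> = (of_real \<alpha> * x + of_real \<beta> * y) / S" by (simp add: add_divide_distrib)
        also have "\<dots> = c + (of_real \<alpha> * (x - c) + of_real \<beta> * (y - c)) / S"
        proof -
          have "of_real \<alpha> * (x - c) + of_real \<beta> * (y - c) = (of_real \<alpha> * x + of_real \<beta> * y) - S * c"
            unfolding S_def by (simp add: algebra_simps)
          thus ?thesis using nz by (simp add: diff_divide_distrib)
        qed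
        finally show ?thesis unfolding S_def .
      qed
      ultimately show ?thesis by simp
    qed
    show False
      by (rule seg_lemma[OF tt q_def q2 d r])
  qed
qed




lemma sin_of_Im: "Im (cnj x * y) > 0 \<Longrightarrow> sin (Arg y - Arg x) > 0"
  using Im_cnj_Arg[of x y]
  by (metis mult_nonneg_nonpos norm_ge_zero not_le zero_le_mult_iff)

lemma Im_of_sin: "x \<noteq> 0 \<Longrightarrow> y \<noteq> 0 \<Longrightarrow> sin (Arg y - Arg x) > 0 \<Longrightarrow> Im (cnj x * y) > 0"
  using Im_cnj_Arg[of x y] by simp

lemma GL:
  assumes pk: "packing P" and mem: "C \<in> P" "X \<in> P" "Y \<in> P"
    and tg: "tangent C X" "tangent C Y" "tangent X Y"
    and o: "Im (cnj (ctr X - ctr C) * (ctr Y - ctr C)) > 0"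
    and cl: "corona_list P C L"
    and rs: "\<forall>G\<in>P. rad G \<ge> s"
    and rr: "(rad C \<le> s \<and> rad X \<le> s) \<or> (rad C \<le> s \<and> rad Y \<le> s) \<or> (rad X \<le> s \<and> rad Y \<le> s)"
  shows "\<exists>i<length L. L!i = X \<and> L!((i+1) mod length L) = Y"
proof -
  define f where "f E = Arg (ctr E - ctr C)" for E
  have sl: "sorted_wrt (\<lambda>E F. f E < f F) L" and sL: "set L = corona P C"
    using cl by (auto simp: corona_list_def f_def)
  have lt: "\<And>a b. a < b \<Longrightarrow> b < length L \<Longrightarrow> f (L!a) < f (L!b)"
    using sorted_wrt_nth_less[OF sl] by blast
  have "X \<in> set L" using sL mem tg by (simp add: corona_def)
  then obtain i where i: "i < length L" "L!i = X" by (auto simp: in_set_conv_nth)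
  have "Y \<in> set L" using sL mem tg by (simp add: corona_def)
  then obtain m where m: "m < length L" "L!m = Y" by (auto simp: in_set_conv_nth)
  define n where "n = length L"
  define j where "j = (i+1) mod n"
  define G where "G = L!j"
  have jn: "j < n" using i unfolding j_def n_def by (intro mod_less_divisor) auto
  show ?thesis
  proof (cases "G = Y")
    case True thus ?thesis using i unfolding G_def j_def n_def by blast
  next
    case GY: False
    have XY: "X \<noteq> Y" using tg(3) by (simp add: tangent_def)
    have mi: "m \<noteq> i" using XY i m by auto
    have mj: "m \<noteq> j" using GY m unfolding G_def by auto
    have Gmem: "G \<in> P" "tangent C G"
      using nth_mem[of j L] jn sL unfolding G_def n_def by (auto simp: corona_def)
    have ord: "(f X < f G \<and> f G < f Y) \<or> (f Y < f X \<and> f X < f G) \<or> (f G < f Y \<and> f Y < f X)"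
    proof (cases "i + 1 < n")
      case True
      hence j1: "j = i + 1" unfolding j_def by simp
      show ?thesis
      proof (cases "m < i")
        case True thus ?thesis using lt[of m i] lt[of i j] i m j1 jn unfolding G_def n_def by auto
      next
        case False hence "j < m" using mi mj j1 by auto
        thus ?thesis using lt[of i j] lt[of j m] i m j1 jn unfolding G_def n_def by auto
      qed
    next
      case False
      hence "i + 1 = n" using i unfolding n_def by simp
      hence j0: "j = 0" unfolding j_def by simp
      have "0 < m" "m < i" using mi mj j0 m \<open>i + 1 = n\<close> unfolding n_def by auto
      thus ?thesis using lt[of 0 m] lt[of m i] i m j0 unfolding G_def n_def by auto
    qed
    have s1: "sin (f Y - f X) > 0" using sin_of_Im[OF o] unfolding f_def .
    have bnd: "\<And>E. - pi < f E \<and> f E \<le> pi" unfolding f_def by (rule Arg_bounded)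
    have s2: "sin (f G - f X) > 0 \<and> sin (f Y - f G) > 0"
      using arg_cases[OF _ _ _ _ _ _ s1 ord] bnd[of X] bnd[of Y] bnd[of G] by auto
    have rpos: "\<And>E. E \<in> P \<Longrightarrow> rad E > 0" using pk by (auto simp: packing_def)
    have nz: "\<And>E. tangent C E \<Longrightarrow> E \<in> P \<Longrightarrow> ctr E - ctr C \<noteq> 0"
    proof
      fix E assume "tangent C E" "E \<in> P" "ctr E - ctr C = 0"
      thus False using rpos[of C] rpos[of E] mem by (auto simp: tangent_def)
    qed
    have o2: "Im (cnj (ctr X - ctr C) * (ctr G - ctr C)) > 0"
      using Im_of_sin[OF nz[OF tg(1) mem(2)] nz[OF Gmem(2) Gmem(1)]] s2 unfolding f_def by auto
    have o3: "Im (cnj (ctr G - ctr C) * (ctr Y - ctr C)) > 0"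
      using Im_of_sin[OF nz[OF Gmem(2) Gmem(1)] nz[OF tg(2) mem(3)]] s2 unfolding f_def by auto
    have GX: "G \<noteq> X" using o2 by (auto simp: algebra_simps)
    have pd: "\<And>D E. D \<in> P \<Longrightarrow> E \<in> P \<Longrightarrow> D \<noteq> E \<Longrightarrow> cmod (ctr D - ctr E) \<ge> rad D + rad E"
      using pk by (auto simp: packing_def)
    show ?thesis
    proof (rule FalseE, rule gc_lemma[of "ctr X" "ctr C" "rad C" "rad X" "ctr Y" "rad Y" "ctr G" "rad G"])
      show "cmod (ctr X - ctr C) = rad C + rad X" using tg by (simp add: tangent_def norm_minus_commute)
      show "cmod (ctr Y - ctr C) = rad C + rad Y" using tg by (simp add: tangent_def norm_minus_commute)
      show "cmod (ctr X - ctr Y) = rad X + rad Y" using tg by (simp add: tangent_def)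
      show "cmod (ctr G - ctr C) = rad C + rad G" using Gmem by (simp add: tangent_def norm_minus_commute)
      show "cmod (ctr G - ctr X) \<ge> rad G + rad X" using pd[OF Gmem(1) mem(2) GX] .
      show "cmod (ctr G - ctr Y) \<ge> rad G + rad Y" using pd[OF Gmem(1) mem(3) GY] .
      show "rad C > 0" "rad X > 0" "rad Y > 0" "rad G > 0" using rpos mem Gmem by auto
      show "Im (cnj (ctr X - ctr C) * (ctr Y - ctr C)) > 0" by (rule o)
      show "Im (cnj (ctr X - ctr C) * (ctr G - ctr C)) > 0" by (rule o2)
      show "Im (cnj (ctr G - ctr C) * (ctr Y - ctr C)) > 0" by (rule o3)
      show "(rad C \<le> rad G \<and> rad X \<le> rad G) \<or> (rad C \<le> rad G \<and> rad Y \<le> rad G) \<or> (rad X \<le> rad G \<and> rad Y \<le> rad G)"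
        using rr rs Gmem by force
    qed
  qed
qed





lemma rot_nth:
  assumes "0 < length u"
  shows "rotate k u ! ((j + c) mod length u) = u ! (((j + k) mod length u + c) mod length u)"
proof -
  have "rotate k u ! ((j + c) mod length u) = u ! ((k + (j + c) mod length u) mod length u)"
    using assms by (simp add: nth_rotate)
  also have "(k + (j + c) mod length u) mod length u = (k + (j + c)) mod length u"
    by (rule mod_add_right_eq)
  also have "k + (j + c) = (j + k) + c" by simp
  also have "((j + k) + c) mod length u = ((j + k) mod length u + c) mod length u"
    by (rule mod_add_left_eq[symmetric])
  finally show ?thesis .
qed

lemma mod_sc: "((j + 1) mod n + 1) mod n = (j + 2) mod (n::nat)"
proof -
  have "((j + 1) mod n + 1) mod n = (j + 1 + 1) mod n" by (rule mod_add_left_eq)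
  thus ?thesis by simp
qed

lemma mod_sc3: "(((j + 1) mod n + 1) mod n + 1) mod n = (j + 3) mod (n::nat)"
proof -
  have "(((j + 1) mod n + 1) mod n + 1) mod n = ((j + 2) mod n + 1) mod n" by (simp only: mod_sc)
  also have "\<dots> = (j + 2 + 1) mod n" by (rule mod_add_left_eq)
  also have "j + 2 + 1 = j + 3" by simp
  finally show ?thesis .
qed


lemma W_0:
  fixes r s :: real
  assumes  "m < length u" "u!((m+1) mod length u) = s" "u!((m+2) mod length u) = s"
    and "s \<noteq> 1" "s \<noteq> r" "r \<noteq> 1"
  and u: "u = [1, r, s, s]"
  shows "(u!m = 1 \<and> u!((m+3) mod length u) = r) \<or> (u!m = r \<and> u!((m+3) mod length u) = 1)"
proof -
    have "m = 0 \<or> m = 1 \<or> m = 2 \<or> m = 3" using assms(1) u by auto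
    thus ?thesis using assms(2-6) unfolding u by (elim disjE) simp_all
qed

lemma W_1:
  fixes r s :: real
  assumes  "m < length u" "u!((m+1) mod length u) = s" "u!((m+2) mod length u) = s"
    and "s \<noteq> 1" "s \<noteq> r" "r \<noteq> 1"
  and u: "u = [1, 1, r, s, s]"
  shows "(u!m = 1 \<and> u!((m+3) mod length u) = r) \<or> (u!m = r \<and> u!((m+3) mod length u) = 1)"
proof -
    have "m = 0 \<or> m = 1 \<or> m = 2 \<or> m = 3 \<or> m = 4" using assms(1) u by auto
    thus ?thesis using assms(2-6) unfolding u by (elim disjE) simp_all
qed

lemma W_2:
  fixes r s :: real
  assumes  "m < length u" "u!((m+1) mod length u) = s" "u!((m+2) mod length u) = s"
    and "s \<noteq> 1" "s \<noteq> r" "r \<noteq> 1"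
  and u: "u = [1, r, r, s, s]"
  shows "(u!m = 1 \<and> u!((m+3) mod length u) = r) \<or> (u!m = r \<and> u!((m+3) mod length u) = 1)"
proof -
    have "m = 0 \<or> m = 1 \<or> m = 2 \<or> m = 3 \<or> m = 4" using assms(1) u by auto
    thus ?thesis using assms(2-6) unfolding u by (elim disjE) simp_all
qed

lemma W_3:
  fixes r s :: real
  assumes  "m < length u" "u!((m+1) mod length u) = s" "u!((m+2) mod length u) = s"
    and "s \<noteq> 1" "s \<noteq> r" "r \<noteq> 1"
  and u: "u = [1, s, r, s, s]"
  shows "(u!m = 1 \<and> u!((m+3) mod length u) = r) \<or> (u!m = r \<and> u!((m+3) mod length u) = 1)"
proof -
    have "m = 0 \<or> m = 1 \<or> m = 2 \<or> m = 3 \<or> m = 4" using assms(1) u by auto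
    thus ?thesis using assms(2-6) unfolding u by (elim disjE) simp_all
qed

lemma W_4:
  fixes r s :: real
  assumes  "m < length u" "u!((m+1) mod length u) = s" "u!((m+2) mod length u) = s"
    and "s \<noteq> 1" "s \<noteq> r" "r \<noteq> 1"
  and u: "u = rev [1, r, s, s]"
  shows "(u!m = 1 \<and> u!((m+3) mod length u) = r) \<or> (u!m = r \<and> u!((m+3) mod length u) = 1)"
proof -
    have "m = 0 \<or> m = 1 \<or> m = 2 \<or> m = 3" using assms(1) u by auto
    thus ?thesis using assms(2-6) unfolding u by (elim disjE) simp_all
qed

lemma W_5:
  fixes r s :: real
  assumes  "m < length u" "u!((m+1) mod length u) = s" "u!((m+2) mod length u) = s"
    and "s \<noteq> 1" "s \<noteq> r" "r \<noteq> 1"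
  and u: "u = rev [1, 1, r, s, s]"
  shows "(u!m = 1 \<and> u!((m+3) mod length u) = r) \<or> (u!m = r \<and> u!((m+3) mod length u) = 1)"
proof -
    have "m = 0 \<or> m = 1 \<or> m = 2 \<or> m = 3 \<or> m = 4" using assms(1) u by auto
    thus ?thesis using assms(2-6) unfolding u by (elim disjE) simp_all
qed

lemma W_6:
  fixes r s :: real
  assumes  "m < length u" "u!((m+1) mod length u) = s" "u!((m+2) mod length u) = s"
    and "s \<noteq> 1" "s \<noteq> r" "r \<noteq> 1"
  and u: "u = rev [1, r, r, s, s]"
  shows "(u!m = 1 \<and> u!((m+3) mod length u) = r) \<or> (u!m = r \<and> u!((m+3) mod length u) = 1)"
proof -
    have "m = 0 \<or> m = 1 \<or> m = 2 \<or> m = 3 \<or> m = 4" using assms(1) u by auto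
    thus ?thesis using assms(2-6) unfolding u by (elim disjE) simp_all
qed

lemma W_7:
  fixes r s :: real
  assumes  "m < length u" "u!((m+1) mod length u) = s" "u!((m+2) mod length u) = s"
    and "s \<noteq> 1" "s \<noteq> r" "r \<noteq> 1"
  and u: "u = rev [1, s, r, s, s]"
  shows "(u!m = 1 \<and> u!((m+3) mod length u) = r) \<or> (u!m = r \<and> u!((m+3) mod length u) = 1)"
proof -
    have "m = 0 \<or> m = 1 \<or> m = 2 \<or> m = 3 \<or> m = 4" using assms(1) u by auto
    thus ?thesis using assms(2-6) unfolding u by (elim disjE) simp_all
qed

lemma W:
  fixes r s :: real
  assumes "u \<in> {[1, r, s, s], [1, 1, r, s, s], [1, r, r, s, s], [1, s, r, s, s],
                 rev [1, r, s, s], rev [1, 1, r, s, s], rev [1, r, r, s, s], rev [1, s, r, s, s]}"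
    and "m < length u" "u!((m+1) mod length u) = s" "u!((m+2) mod length u) = s"
    and "s \<noteq> 1" "s \<noteq> r" "r \<noteq> 1"
  shows "(u!m = 1 \<and> u!((m+3) mod length u) = r) \<or> (u!m = r \<and> u!((m+3) mod length u) = 1)"
proof -
  from assms(1) have "u = [1, r, s, s] \<or> u = [1, 1, r, s, s] \<or> u = [1, r, r, s, s] \<or> u = [1, s, r, s, s] \<or> u = rev [1, r, s, s] \<or> u = rev [1, 1, r, s, s] \<or> u = rev [1, r, r, s, s] \<or> u = rev [1, s, r, s, s]" by (simp only: insert_iff empty_iff simp_thms)
  then show ?thesis
  proof (elim disjE)
    assume u: "u = [1, r, s, s]"
    show ?thesis by (rule W_0[OF assms(2-7) u])
  next
    assume u: "u = [1, 1, r, s, s]"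
    show ?thesis by (rule W_1[OF assms(2-7) u])
  next
    assume u: "u = [1, r, r, s, s]"
    show ?thesis by (rule W_2[OF assms(2-7) u])
  next
    assume u: "u = [1, s, r, s, s]"
    show ?thesis by (rule W_3[OF assms(2-7) u])
  next
    assume u: "u = rev [1, r, s, s]"
    show ?thesis by (rule W_4[OF assms(2-7) u])
  next
    assume u: "u = rev [1, 1, r, s, s]"
    show ?thesis by (rule W_5[OF assms(2-7) u])
  next
    assume u: "u = rev [1, r, r, s, s]"
    show ?thesis by (rule W_6[OF assms(2-7) u])
  next
    assume u: "u = rev [1, s, r, s, s]"
    show ?thesis by (rule W_7[OF assms(2-7) u])
  qed
qed


lemma Wex:
  fixes r s :: real
  assumes "u \<in> {[1, r, s, s], [1, 1, r, s, s], [1, r, r, s, s], [1, s, r, s, s],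
                 rev [1, r, s, s], rev [1, 1, r, s, s], rev [1, r, r, s, s], rev [1, s, r, s, s]}"
  shows "\<exists>p<length u. u!((p+1) mod length u) = s \<and> u!((p+2) mod length u) = s"
proof -
  from assms(1) have "u = [1, r, s, s] \<or> u = [1, 1, r, s, s] \<or> u = [1, r, r, s, s] \<or> u = [1, s, r, s, s] \<or> u = rev [1, r, s, s] \<or> u = rev [1, 1, r, s, s] \<or> u = rev [1, r, r, s, s] \<or> u = rev [1, s, r, s, s]" by (simp only: insert_iff empty_iff simp_thms)
  then show ?thesis
  proof (elim disjE)
    assume u: "u = [1, r, s, s]"
    show ?thesis by (rule exI[of _ 1]) (simp add: u)
  next
    assume u: "u = [1, 1, r, s, s]"
    show ?thesis by (rule exI[of _ 2]) (simp add: u)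
  next
    assume u: "u = [1, r, r, s, s]"
    show ?thesis by (rule exI[of _ 2]) (simp add: u)
  next
    assume u: "u = [1, s, r, s, s]"
    show ?thesis by (rule exI[of _ 2]) (simp add: u)
  next
    assume u: "u = rev [1, r, s, s]"
    show ?thesis by (rule exI[of _ 3]) (simp add: u)
  next
    assume u: "u = rev [1, 1, r, s, s]"
    show ?thesis by (rule exI[of _ 4]) (simp add: u)
  next
    assume u: "u = rev [1, r, r, s, s]"
    show ?thesis by (rule exI[of _ 4]) (simp add: u)
  next
    assume u: "u = rev [1, s, r, s, s]"
    show ?thesis by (rule exI[of _ 4]) (simp add: u)
  qed
qed


lemma exj:
  assumes "0 < (n::nat)" "p < n"
  shows "\<exists>j<n. (j + k) mod n = p"
proof -
  define j where "j = (p + (n - k mod n)) mod n"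
  have "j < n" using assms unfolding j_def by simp
  moreover have "(j + k) mod n = p"
  proof -
    have "k mod n < n" using assms by simp
    hence e: "p + (n - k mod n) + k mod n = p + n" by arith
    have "(j + k) mod n = (p + (n - k mod n) + k) mod n" unfolding j_def by (simp add: mod_add_left_eq)
    also have "\<dots> = (p + (n - k mod n) + k mod n) mod n" by (simp add: mod_add_right_eq)
    also have "\<dots> = p" using e assms by simp
    finally show ?thesis .
  qed
  ultimately show ?thesis by blast
qed




definition "W8 r s = {[1, r, s, s], [1, 1, r, s, s], [1, r, r, s, s], [1, s, r, s, s],
   rev [1, r, s, s], rev [1, 1, r, s, s], rev [1, r, r, s, s], rev [1, s, r, s, s :: real]}"

lemma in_W8:
  assumes "w \<in> {[1, r, s, s], [1, 1, r, s, s], [1, r, r, s, s], [1, s, r, s, s :: real]}"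
  shows "w \<in> W8 r s" "rev w \<in> W8 r s"
proof -
  from assms have "w = [1, r, s, s] \<or> w = [1, 1, r, s, s] \<or> w = [1, r, r, s, s] \<or> w = [1, s, r, s, s]"
    by (simp only: insert_iff empty_iff simp_thms)
  thus "w \<in> W8 r s" "rev w \<in> W8 r s" unfolding W8_def
    by (elim disjE; simp only: insert_iff simp_thms)+
qed

lemma cyc_u:
  assumes "cyclic_equiv v w" "w \<in> {[1, r, s, s], [1, 1, r, s, s], [1, r, r, s, s], [1, s, r, s, s :: real]}"
  obtains k u where "v = rotate k u" "u \<in> W8 r s"
  using assms in_W8[OF assms(2)] unfolding cyclic_equiv_def by blast

lemma win:
  fixes r s :: real
  assumes "cyclic_equiv v w" "w \<in> {[1, r, s, s], [1, 1, r, s, s], [1, r, r, s, s], [1, s, r, s, s]}"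
    and "0 < s" "s < r" "r < 1"
    and "j < length v" "v!((j+1) mod length v) = s" "v!((j+2) mod length v) = s"
  shows "(v!j = 1 \<and> v!((j+3) mod length v) = r) \<or> (v!j = r \<and> v!((j+3) mod length v) = 1)"
proof -
  obtain k u where vu: "v = rotate k u" and u: "u \<in> W8 r s" using cyc_u[OF assms(1,2)] .
  define n where "n = length u"
  have ln: "length v = n" unfolding vu n_def by simp
  have np: "0 < n" using assms(6) ln by simp
  define m where "m = (j + k) mod n"
  have mn: "m < n" using np unfolding m_def by simp
  have R: "\<And>c. v ! ((j + c) mod n) = u ! ((m + c) mod n)"
    unfolding vu m_def n_def by (rule rot_nth) (use np n_def in simp)
  have v0: "v!j = u!m" using R[of 0] assms(6) ln mn by simp
  have "(u!m = 1 \<and> u!((m+3) mod length u) = r) \<or> (u!m = r \<and> u!((m+3) mod length u) = 1)"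
    apply (rule W[of u r s m])
    using u mn R[of 1] R[of 2] assms(7,8) assms(3-5) ln unfolding W8_def n_def by auto
  thus ?thesis using v0 R[of 3] ln unfolding n_def by simp
qed

lemma ssex:
  fixes r s :: real
  assumes "cyclic_equiv v w" "w \<in> {[1, r, s, s], [1, 1, r, s, s], [1, r, r, s, s], [1, s, r, s, s]}"
  shows "\<exists>j<length v. v!((j+1) mod length v) = s \<and> v!((j+2) mod length v) = s"
proof -
  obtain k u where vu: "v = rotate k u" and u: "u \<in> W8 r s" using cyc_u[OF assms(1,2)] .
  define n where "n = length u"
  have ln: "length v = n" unfolding vu n_def by simp
  obtain p where p: "p < n" "u!((p+1) mod n) = s" "u!((p+2) mod n) = s"
    using Wex[of u r s] u unfolding W8_def n_def by blast
  have np: "0 < n" using p by simp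
  obtain j where j: "j < n" "(j + k) mod n = p" using exj[OF np p(1)] by blast
  have R: "\<And>c. v ! ((j + c) mod n) = u ! (((j + k) mod n + c) mod n)"
    unfolding vu n_def by (rule rot_nth) (use np n_def in simp)
  show ?thesis using j R[of 1] R[of 2] p ln by auto
qed

lemma sorted_distinct: "sorted_wrt (\<lambda>x y. f x < (f y :: real)) L \<Longrightarrow> distinct L"
  by (induction L) auto

lemma cl_unique:
  assumes "corona_list P C L1" "corona_list P C L2"
  shows "L1 = L2"
proof -
  define f where "f E = Arg (ctr E - ctr C)" for E
  have s1: "sorted_wrt (\<lambda>E F. f E < f F) L1" and s2: "sorted_wrt (\<lambda>E F. f E < f F) L2"
    and st: "set L1 = set L2"
    using assms by (auto simp: corona_list_def f_def)
  have m1: "sorted_wrt (<) (map f L1)" using s1 by (simp add: sorted_wrt_map)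
  have m2: "sorted_wrt (<) (map f L2)" using s2 by (simp add: sorted_wrt_map)
  have "map f L1 = map f L2"
    using m1 m2 st by (metis list.set_map sorted_distinct_set_unique strict_sorted_iff)
  moreover have "inj_on f (set L1 \<union> set L2)"
    using m1 st by (simp add: strict_sorted_iff distinct_map)
  ultimately show ?thesis by (simp add: inj_on_map_eq_map)
qed

lemma tangent_sym: "tangent D E \<Longrightarrow> tangent E D"
  by (auto simp: tangent_def norm_minus_commute)

lemma in_cl: "corona_list P C L \<Longrightarrow> E \<in> set L \<longleftrightarrow> E \<in> P \<and> tangent C E"
  by (auto simp: corona_list_def corona_def)

lemma notsix:
  assumes "E \<in> P" "tangent C E" "rad E \<noteq> s"
  shows "\<not> has_coding P C [s, s, s, s, s, s]"
proof
  assume "has_coding P C [s, s, s, s, s, s]"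
  then obtain L k where L: "corona_list P C L" and
     "map rad L = rotate k [s, s, s, s, s, s] \<or> map rad L = rotate k (rev [s, s, s, s, s, s])"
    unfolding has_coding_def cyclic_equiv_def by blast
  hence "set (map rad L) \<subseteq> {s}" by auto
  moreover have "E \<in> set L" using in_cl[OF L] assms by simp
  ultimately show False using assms by auto
qed

lemma coding_list: "has_coding P C w \<Longrightarrow> corona_list P C L \<Longrightarrow> cyclic_equiv (map rad L) w"
  unfolding has_coding_def using cl_unique by blast




lemma compact_list:
  assumes "compact_packing P" "C \<in> P"
  obtains L where "corona_list P C L" "L \<noteq> []"
    "\<And>i. i < length L \<Longrightarrow> tangent (L ! i) (L ! ((i + 1) mod length L)) \<and>
           Im (cnj (ctr (L ! i) - ctr C) * (ctr (L ! ((i + 1) mod length L)) - ctr C)) > 0"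
  using assms unfolding compact_packing_def by blast

lemma dist_idx:
  assumes "corona_list P C L" "i < length L" "i' < length L" "L!i = L!i'"
  shows "i = i'"
proof -
  have "distinct L" using sorted_distinct[of "\<lambda>E. Arg (ctr E - ctr C)" L] assms(1) unfolding corona_list_def by blast
  thus ?thesis using assms nth_eq_iff_index_eq by blast
qed

lemma mod_s2: "((j + 2) mod n + 1) mod n = (j + 3) mod (n::nat)"
proof -
  have "((j + 2) mod n + 1) mod n = (j + 2 + 1) mod n" by (rule mod_add_left_eq)
  also have "j + 2 + 1 = j + 3" by simp
  finally show ?thesis .
qed

lemma winrad:
  fixes r s :: real
  assumes cyc: "cyclic_equiv (map rad L) w" and wm: "w \<in> {[1, r, s, s], [1, 1, r, s, s], [1, r, r, s, s], [1, s, r, s, s]}"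
    and r0: "0 < s" "s < r" "r < 1"
    and j: "j < length L" "rad (L!((j+1) mod length L)) = s" "rad (L!((j+2) mod length L)) = s"
  shows "(rad (L!j) = 1 \<and> rad (L!((j+3) mod length L)) = r) \<or> (rad (L!j) = r \<and> rad (L!((j+3) mod length L)) = 1)"
proof -
  have np: "0 < length L" using j(1) by arith
  have nm: "\<And>i. map rad L ! (i mod length L) = rad (L!(i mod length L))" using np by (intro nth_map) simp
  have nj: "map rad L ! j = rad (L!j)" using j(1) by (rule nth_map)
  have A: "map rad L ! ((j+1) mod length (map rad L)) = s" using j(2) nm[of "j+1"] by (simp only: length_map)
  have B: "map rad L ! ((j+2) mod length (map rad L)) = s" using j(3) nm[of "j+2"] by (simp only: length_map)
  have jl: "j < length (map rad L)" using j(1) by (simp only: length_map)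
  have "(map rad L ! j = 1 \<and> map rad L ! ((j+3) mod length (map rad L)) = r) \<or>
        (map rad L ! j = r \<and> map rad L ! ((j+3) mod length (map rad L)) = 1)"
    by (rule win[OF cyc wm r0 jl A B])
  thus ?thesis by (simp only: length_map nm nj)
qed

theorem lemma4:
  fixes P :: "disc set" and r s :: real and w :: "real list" and D :: disc
  assumes "0 < s" and "s < r" and "r < 1"
    and "compact_packing P"
    and "\<forall>E\<in>P. rad E \<in> {1, r, s}"
    and "w \<in> {[1, r, s, s], [1, 1, r, s, s], [1, r, r, s, s], [1, s, r, s, s]}"
    and "D \<in> P" and "rad D = s" and "has_coding P D w"
  shows "\<exists>D'\<in>P. rad D' = s \<and> \<not> has_coding P D' w \<and> \<not> has_coding P D' [s, s, s, s, s, s]"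
proof -
  note r0 = assms(1-3)
  note wmem = assms(6)
  have pk: "packing P" using assms(4) by (simp add: compact_packing_def)
  have rs: "\<forall>G\<in>P. rad G \<ge> s" using assms(5) r0 by force
  obtain LD where cLD: "corona_list P D LD" "LD \<noteq> []"
    and cD: "\<And>i. i < length LD \<Longrightarrow> tangent (LD ! i) (LD ! ((i + 1) mod length LD)) \<and>
           Im (cnj (ctr (LD ! i) - ctr D) * (ctr (LD ! ((i + 1) mod length LD)) - ctr D)) > 0"
    using compact_list[OF assms(4,7)] by blast
  define nD where "nD = length LD"
  have cyc: "cyclic_equiv (map rad LD) w" using coding_list[OF assms(9) cLD(1)] .
  obtain j where j0: "j < length (map rad LD)" "map rad LD ! ((j+1) mod length (map rad LD)) = s"
     "map rad LD ! ((j+2) mod length (map rad LD)) = s"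
    using ssex[OF cyc wmem] by blast
  have ln: "length (map rad LD) = nD" unfolding nD_def by simp
  have jl: "j < nD" using j0(1) ln by simp
  have npos: "0 < nD" using jl by simp
  have nm: "\<And>i. map rad LD ! (i mod nD) = rad (LD ! (i mod nD))"
    using npos by (intro nth_map) (simp add: nD_def)
  have j: "j < nD" "rad (LD!((j+1) mod nD)) = s" "rad (LD!((j+2) mod nD)) = s"
    using jl j0(2,3) unfolding ln nm by auto
  have wD: "(rad (LD!j) = 1 \<and> rad (LD!((j+3) mod nD)) = r) \<or> (rad (LD!j) = r \<and> rad (LD!((j+3) mod nD)) = 1)"
    using winrad[OF cyc wmem r0 j[unfolded nD_def]] unfolding nD_def .
  define a where "a = LD!j"
  define s1 where "s1 = LD!((j+1) mod nD)"
  define s2 where "s2 = LD!((j+2) mod nD)"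
  define b where "b = LD!((j+3) mod nD)"
  have i1: "(j+1) mod nD < nD" "(j+2) mod nD < nD" "(j+3) mod nD < nD" using npos by auto
  have cj0: "tangent a s1 \<and> Im (cnj (ctr a - ctr D) * (ctr s1 - ctr D)) > 0"
    using cD[of j] j unfolding a_def s1_def nD_def by simp
  have cj1: "tangent s1 s2 \<and> Im (cnj (ctr s1 - ctr D) * (ctr s2 - ctr D)) > 0"
    using cD[of "(j+1) mod nD"] i1 mod_sc[of j nD] unfolding s1_def s2_def nD_def by simp
  have cj2: "tangent s2 b \<and> Im (cnj (ctr s2 - ctr D) * (ctr b - ctr D)) > 0"
    using cD[of "(j+2) mod nD"] i1 mod_s2[of j nD] unfolding s2_def b_def nD_def by simp
  have memD: "\<And>E. E \<in> set LD \<Longrightarrow> E \<in> P \<and> tangent D E" using in_cl[OF cLD(1)] by blast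
  have ma: "a \<in> P" "tangent D a" using memD[of a] j unfolding a_def nD_def by auto
  have m1: "s1 \<in> P" "tangent D s1" using memD[of s1] i1 unfolding s1_def nD_def by auto
  have m2: "s2 \<in> P" "tangent D s2" using memD[of s2] i1 unfolding s2_def nD_def by auto
  have mb: "b \<in> P" "tangent D b" using memD[of b] i1 unfolding b_def nD_def by auto
  have rad1: "rad s1 = s" "rad s2 = s" using j unfolding s1_def s2_def by auto
  have rab: "(rad a = 1 \<and> rad b = r) \<or> (rad a = r \<and> rad b = 1)" using wD unfolding a_def b_def .
  have rans: "rad a \<noteq> s" "rad b \<noteq> s" using rab r0 by auto
  show ?thesis
  proof (cases "has_coding P s1 w \<and> has_coding P s2 w")
    case False
    hence "\<not> has_coding P s1 w \<or> \<not> has_coding P s2 w" by blast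
    then show ?thesis
    proof (elim disjE)
      assume h: "\<not> has_coding P s1 w"
      show ?thesis
        using notsix[OF ma(1) tangent_sym[OF conjunct1[OF cj0]] rans(1)] h m1 rad1 by blast
    next
      assume h: "\<not> has_coding P s2 w"
      show ?thesis
        using notsix[OF mb(1) conjunct1[OF cj2] rans(2)] h m2 rad1 by blast
    qed
  next
    case True
    obtain L1 where cL1: "corona_list P s1 L1" "L1 \<noteq> []"
      and c1: "\<And>i. i < length L1 \<Longrightarrow> tangent (L1 ! i) (L1 ! ((i + 1) mod length L1)) \<and>
           Im (cnj (ctr (L1 ! i) - ctr s1) * (ctr (L1 ! ((i + 1) mod length L1)) - ctr s1)) > 0"
      using compact_list[OF assms(4) m1(1)] by blast
    obtain L2 where cL2: "corona_list P s2 L2" "L2 \<noteq> []"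
      and c2: "\<And>i. i < length L2 \<Longrightarrow> tangent (L2 ! i) (L2 ! ((i + 1) mod length L2)) \<and>
           Im (cnj (ctr (L2 ! i) - ctr s2) * (ctr (L2 ! ((i + 1) mod length L2)) - ctr s2)) > 0"
      using compact_list[OF assms(4) m2(1)] by blast
    define n1 where "n1 = length L1"
    define n2 where "n2 = length L2"
    have n1p: "0 < n1" "0 < n2" using cL1 cL2 unfolding n1_def n2_def by auto
    have cy1: "cyclic_equiv (map rad L1) w" using coding_list True cL1 by blast
    have cy2: "cyclic_equiv (map rad L2) w" using coding_list True cL2 by blast
    have oa: "Im (cnj (ctr D - ctr s1) * (ctr a - ctr s1)) > 0"
      using cj0[THEN conjunct2] orient_rot[where a="ctr D" and b="ctr a" and c="ctr s1"] orient_rot[where a="ctr a" and b="ctr s1" and c="ctr D"] by linarith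
    have ob: "Im (cnj (ctr s2 - ctr s1) * (ctr D - ctr s1)) > 0"
      using cj1[THEN conjunct2] orient_rot[where a="ctr D" and b="ctr s1" and c="ctr s2"] by linarith
    have oc: "Im (cnj (ctr D - ctr s2) * (ctr s1 - ctr s2)) > 0"
      using ob orient_rot[where a="ctr s1" and b="ctr s2" and c="ctr D"] by linarith
    have od: "Im (cnj (ctr b - ctr s2) * (ctr D - ctr s2)) > 0"
      using cj2[THEN conjunct2] orient_rot[where a="ctr D" and b="ctr s2" and c="ctr b"] by linarith
    have t0: "tangent s1 D" "tangent s2 D" "tangent s1 a" "tangent s2 s1"
      using m1 m2 cj0 cj1 tangent_sym by blast+
    obtain i1 where I1: "i1 < n1" "L1!i1 = s2" "L1!((i1+1) mod n1) = D"
      using GL[OF pk m1(1) m2(1) assms(7) cj1[THEN conjunct1] t0(1) t0(2) ob cL1(1) rs] rad1 assms(8)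
      unfolding n1_def by auto
    obtain i2 where I2: "i2 < n1" "L1!i2 = D" "L1!((i2+1) mod n1) = a"
      using GL[OF pk m1(1) assms(7) ma(1) t0(1) t0(3) ma(2) oa cL1(1) rs] rad1 assms(8)
      unfolding n1_def by auto
    have i2e: "i2 = (i1+1) mod n1"
      using dist_idx[OF cL1(1), of i2 "(i1+1) mod n1"] I1 I2 n1p unfolding n1_def by auto
    define p where "p = (i1 + n1 - 1) mod n1"
    have pn: "p < n1" using n1p unfolding p_def by simp
    have p1: "(p + 1) mod n1 = i1"
    proof -
      have "(p + 1) mod n1 = (i1 + n1 - 1 + 1) mod n1" unfolding p_def by (rule mod_add_left_eq)
      also have "i1 + n1 - 1 + 1 = i1 + n1" using n1p by simp
      finally show ?thesis using I1 by simp
    qed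
    define X where "X = L1!p"
    have cp: "tangent X s2 \<and> Im (cnj (ctr X - ctr s1) * (ctr s2 - ctr s1)) > 0"
      using c1[of p] pn p1 I1 unfolding X_def n1_def by simp
    have mX: "X \<in> P" "tangent s1 X" using in_cl[OF cL1(1), of X] pn unfolding X_def n1_def by auto
    have oe: "Im (cnj (ctr s1 - ctr s2) * (ctr X - ctr s2)) > 0"
      using cp[THEN conjunct2] orient_rot[where a="ctr s1" and b="ctr X" and c="ctr s2"] orient_rot[where a="ctr X" and b="ctr s2" and c="ctr s1"] by linarith
    have wi1: "(rad (L1!p) = 1 \<and> rad (L1!((p+3) mod n1)) = r) \<or> (rad (L1!p) = r \<and> rad (L1!((p+3) mod n1)) = 1)"
    proof -
      have e2: "(p+2) mod n1 = (i1+1) mod n1" using mod_sc[of p n1] p1 by simp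
      have e3: "(p+3) mod n1 = (i2+1) mod n1" using mod_sc3[of p n1] p1 i2e by simp
      have "rad (L1!((p+1) mod n1)) = s" using p1 I1 rad1 by simp
      moreover have "rad (L1!((p+2) mod n1)) = s" using e2 I1 assms(8) by simp
      ultimately show ?thesis
        using winrad[OF cy1 wmem r0, of p] pn unfolding n1_def by blast
    qed
    have rX1: "(rad X = 1 \<and> rad a = r) \<or> (rad X = r \<and> rad a = 1)"
    proof -
      have "(p+3) mod n1 = (i2+1) mod n1" using mod_sc3[of p n1] p1 i2e by simp
      thus ?thesis using wi1 I2 unfolding X_def by simp
    qed
    have t1: "tangent s2 b" "tangent b D" "tangent D s1" "tangent s2 X" "tangent s1 X"
      using cj2 mb m1 cp mX tangent_sym by blast+
    obtain i3 where I3: "i3 < n2" "L2!i3 = b" "L2!((i3+1) mod n2) = D"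
      using GL[OF pk m2(1) mb(1) assms(7) t1(1) t0(2) t1(2) od cL2(1) rs] rad1 assms(8)
      unfolding n2_def by auto
    obtain i4 where I4: "i4 < n2" "L2!i4 = D" "L2!((i4+1) mod n2) = s1"
      using GL[OF pk m2(1) assms(7) m1(1) t0(2) t0(4) t1(3) oc cL2(1) rs] rad1 assms(8)
      unfolding n2_def by auto
    obtain i5 where I5: "i5 < n2" "L2!i5 = s1" "L2!((i5+1) mod n2) = X"
      using GL[OF pk m2(1) m1(1) mX(1) t0(4) t1(4) t1(5) oe cL2(1) rs] rad1
      unfolding n2_def by auto
    have i4e: "i4 = (i3+1) mod n2"
      using dist_idx[OF cL2(1), of i4 "(i3+1) mod n2"] I3 I4 n1p unfolding n2_def by auto
    have i5e: "i5 = (i4+1) mod n2"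
      using dist_idx[OF cL2(1), of i5 "(i4+1) mod n2"] I4 I5 n1p unfolding n2_def by auto
    have rX2: "(rad b = 1 \<and> rad X = r) \<or> (rad b = r \<and> rad X = 1)"
    proof -
      have e2: "(i3+2) mod n2 = (i4+1) mod n2" using mod_sc[of i3 n2] i4e by simp
      have e3: "(i3+3) mod n2 = (i5+1) mod n2" using mod_sc3[of i3 n2] i4e i5e by simp
      have "rad (L2!((i3+1) mod n2)) = s" using I3 assms(8) by simp
      moreover have "rad (L2!((i3+2) mod n2)) = s" using e2 I4 rad1 by simp
      ultimately have "(rad (L2!i3) = 1 \<and> rad (L2!((i3+3) mod n2)) = r) \<or> (rad (L2!i3) = r \<and> rad (L2!((i3+3) mod n2)) = 1)"
        using winrad[OF cy2 wmem r0, of i3] I3 unfolding n2_def by blast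
      thus ?thesis using e3 I3 I5 by simp
    qed
    show ?thesis using rab rX1 rX2 r0 by auto
  qed
qed


end
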